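(* Let $\alpha>0$, $0\le m<s<M$, $f\in\mathcal{F}(m,M,s)$, and $x_0\in[0,\pi]$. Put $l=\pi(s-m)/(M-m)$ and $l^-=\pi-l$. Then $$\eta_\alpha(x_0)M-(M-m)\nu_\alpha(x_0,l^-)\le u_f(x_0)\le \eta_\alpha(x_0)m+(M-m)\nu_\alpha(x_0,l).$$ Equality holds in the right inequality if and only if $f=m+(M-m)\chi_{I(a_m,l)}$ a.e. on $[-\pi,\pi]$, where $a_m=x_0(1-lc_\alpha)$ if $x_0(1-lc_\alpha)<\pi-l$ and $a_m=\pi-l$ otherwise. Equality holds in the left inequality if and only if $f=M-(M-m)\chi_{I(a_m^-,l^-)}$ a.e. on $[-\pi,\pi]$, where $a_m^-=x_0(1-l^-c_\alpha)$ if $x_0(1-l^-c_\alpha)<\pi-l^-$ and $a_m^-=\pi-l^-$ otherwise.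
   Context: Robin problem: for $\alpha>0$ and $f\in L^1[-\pi,\pi]$, find $u\in C^1[-\pi,\pi]$ with $u'$ absolutely continuous on $[-\pi,\pi]$, $-u''=f$ a.e. on $(-\pi,\pi)$, and $-u'(-\pi)+\alpha u(-\pi)=u'(\pi)+\alpha u(\pi)=0$. It has a unique solution $u_f(x)=\int_{-\pi}^{\pi}G(x,y)f(y)\,dy$, where $G(x,y)=-\tfrac12 c_\alpha xy-\tfrac12|x-y|+\tfrac{1}{2c_\alpha}$ and $c_\alpha=\alpha/(1+\alpha\pi)$. For $0\le m<s<M$, $\mathcal{F}(m,M,s)$ is the set of $f\in L^1[-\pi,\pi]$ with $m\le f\le M$ and $\|f\|_{L^1}=2\pi s$. $I(a,l)=[a-l,a+l]$, $\chi_E$ is the characteristic function of $E$. $\eta_\alpha(x)=-\tfrac12x^2+\tfrac{\pi}{\alpha}+\tfrac{\pi^2}{2}$. For $x_0\in[0,\pi]$ and $l\in(0,\pi)$: $\nu_\alpha(x_0,l)=\dfrac{l}{c_\alpha}\Big(1-\dfrac{lc_\alpha}{2}\Big)\big(1-x_0^2c_\alpha^2\big)$ if $x_0<\dfrac{\pi-l}{1-lc_\alpha}$, and $\nu_\alpha(x_0,l)=-\tfrac12(\pi-x_0)^2+l(1-c_\alpha x_0)\big(2\pi-l+\tfrac1\alpha\big)$ otherwise. *)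

theory Defs
  imports "HOL-Analysis.Analysis"
begin

definition c_alpha :: "real \<Rightarrow> real" where
  "c_alpha \<alpha> = \<alpha> / (1 + \<alpha> * pi)"

(* Green's function of the Robin problem *)
definition green :: "real \<Rightarrow> real \<Rightarrow> real \<Rightarrow> real" where
  "green \<alpha> x y = - (1/2) * c_alpha \<alpha> * x * y - (1/2) * \<bar>x - y\<bar> + 1 / (2 * c_alpha \<alpha>)"

(* the solution u_f of the Robin problem, via the Green representation *)
definition u_sol :: "real \<Rightarrow> (real \<Rightarrow> real) \<Rightarrow> real \<Rightarrow> real" where
  "u_sol \<alpha> f x = (LINT y:{-pi..pi}|lborel. green \<alpha> x y * f y)"

definition F_class :: "real \<Rightarrow> real \<Rightarrow> real \<Rightarrow> (real \<Rightarrow> real) set" where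
  "F_class m M s = {f. set_integrable lborel {-pi..pi} f
      \<and> (AE x in lborel. x \<in> {-pi..pi} \<longrightarrow> m \<le> f x \<and> f x \<le> M)
      \<and> (LINT x:{-pi..pi}|lborel. \<bar>f x\<bar>) = 2 * pi * s}"

definition eta :: "real \<Rightarrow> real \<Rightarrow> real" where
  "eta \<alpha> x = - (1/2) * x^2 + pi / \<alpha> + pi^2 / 2"

definition nu :: "real \<Rightarrow> real \<Rightarrow> real \<Rightarrow> real" where
  "nu \<alpha> x0 l =
     (if x0 < (pi - l) / (1 - l * c_alpha \<alpha>)
      then l / c_alpha \<alpha> * (1 - l * c_alpha \<alpha> / 2) * (1 - x0^2 * (c_alpha \<alpha>)^2)
      else - (1/2) * (pi - x0)^2 + l * (1 - c_alpha \<alpha> * x0) * (2 * pi - l + 1 / \<alpha>))"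

definition I_int :: "real \<Rightarrow> real \<Rightarrow> real set" where
  "I_int a l = {a - l .. a + l}"

definition a_opt :: "real \<Rightarrow> real \<Rightarrow> real \<Rightarrow> real" where
  "a_opt \<alpha> x0 l = (if x0 * (1 - l * c_alpha \<alpha>) < pi - l then x0 * (1 - l * c_alpha \<alpha>) else pi - l)"

end

theory Submission
  imports Defs
begin

lemma c_facts:
  assumes "\<alpha> > 0"
  shows "c_alpha \<alpha> > 0" "c_alpha \<alpha> * pi < 1" "1 / c_alpha \<alpha> = 1/\<alpha> + pi"
proof -
  have d: "1 + \<alpha> * pi > 0" using assms pi_gt_zero by (simp add: add_pos_pos)
  show "c_alpha \<alpha> > 0" using assms d by (simp add: c_alpha_def)
  show "c_alpha \<alpha> * pi < 1" using assms d by (simp add: c_alpha_def field_simps)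
  show "1 / c_alpha \<alpha> = 1/\<alpha> + pi" using assms d by (simp add: c_alpha_def field_simps)
qed

lemma G_left: "y \<le> x0 \<Longrightarrow> green \<alpha> x0 y = (1/(2*c_alpha \<alpha>) - x0/2) + ((1 - c_alpha \<alpha> * x0)/2) * y"
  by (simp add: green_def field_simps)

lemma G_right: "x0 \<le> y \<Longrightarrow> green \<alpha> x0 y = (1/(2*c_alpha \<alpha>) + x0/2) - ((1 + c_alpha \<alpha> * x0)/2) * y"
  by (simp add: green_def field_simps)

lemma lin_has_integral:
  fixes A B a b :: real
  assumes "a \<le> b"
  shows "((\<lambda>y. A + B*y) has_integral (A*(b-a) + B*(b^2-a^2)/2)) {a..b}"
proof -
  have "((\<lambda>y. A + B*y) has_integral ((\<lambda>y. A*y + B*y^2/2) b - (\<lambda>y. A*y + B*y^2/2) a)) {a..b}"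
    apply (rule fundamental_theorem_of_calculus[OF assms])
    apply (rule has_vector_derivative_at_within)
    apply (subst has_real_derivative_iff_has_vector_derivative[symmetric])
    apply (auto intro!: derivative_eq_intros)
    done
  then show ?thesis by (simp add: algebra_simps diff_divide_distrib)
qed

lemma green_cont: "continuous_on S (green \<alpha> x0)"
  unfolding green_def by (intro continuous_intros)

lemma green_has_integral:
  assumes "p \<le> x0" "x0 \<le> q"
  shows "(green \<alpha> x0 has_integral
     (((1/(2*c_alpha \<alpha>) - x0/2)*(x0-p) + ((1 - c_alpha \<alpha> * x0)/2)*(x0^2-p^2)/2)
    + ((1/(2*c_alpha \<alpha>) + x0/2)*(q-x0) + (-((1 + c_alpha \<alpha> * x0)/2))*(q^2-x0^2)/2))) {p..q}"
proof (rule has_integral_combine[OF assms])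
  show "(green \<alpha> x0 has_integral ((1/(2*c_alpha \<alpha>) - x0/2)*(x0-p) + ((1 - c_alpha \<alpha> * x0)/2)*(x0^2-p^2)/2)) {p..x0}"
    by (rule has_integral_eq[OF _ lin_has_integral[OF assms(1)]]) (simp add: G_left)
  show "(green \<alpha> x0 has_integral ((1/(2*c_alpha \<alpha>) + x0/2)*(q-x0) + (-((1 + c_alpha \<alpha> * x0)/2))*(q^2-x0^2)/2)) {x0..q}"
    by (rule has_integral_eq[OF _ lin_has_integral[OF assms(2)]]) (simp add: G_right)
qed

lemma green_set_integral:
  assumes "p \<le> x0" "x0 \<le> q"
  shows "(LINT y:{p..q}|lborel. green \<alpha> x0 y) =
     (((1/(2*c_alpha \<alpha>) - x0/2)*(x0-p) + ((1 - c_alpha \<alpha> * x0)/2)*(x0^2-p^2)/2)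
    + ((1/(2*c_alpha \<alpha>) + x0/2)*(q-x0) + (-((1 + c_alpha \<alpha> * x0)/2))*(q^2-x0^2)/2))"
  using set_borel_integral_eq_integral(2)[OF borel_integrable_atLeastAtMost'[OF green_cont]]
    integral_unique[OF green_has_integral[OF assms]] by simp

lemma G_mono_left:
  assumes "\<alpha> > 0" "0 \<le> x0" "x0 \<le> pi" "y \<le> z" "z \<le> x0"
  shows "green \<alpha> x0 y \<le> green \<alpha> x0 z"
proof -
  have "c_alpha \<alpha> * x0 \<le> c_alpha \<alpha> * pi" using c_facts(1)[OF assms(1)] assms by simp
  then have k: "(1 - c_alpha \<alpha> * x0)/2 \<ge> 0" using c_facts(2)[OF assms(1)] by simp
  have "((1 - c_alpha \<alpha> * x0)/2) * y \<le> ((1 - c_alpha \<alpha> * x0)/2) * z"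
    using mult_left_mono[OF assms(4) k] .
  then show ?thesis using assms by (simp add: G_left)
qed

lemma G_mono_right:
  assumes "\<alpha> > 0" "0 \<le> x0" "x0 \<le> pi" "y \<le> z" "x0 \<le> y"
  shows "green \<alpha> x0 z \<le> green \<alpha> x0 y"
proof -
  have "c_alpha \<alpha> * x0 \<ge> 0" using c_facts(1)[OF assms(1)] assms by simp
  then have k: "(1 + c_alpha \<alpha> * x0)/2 \<ge> 0" by simp
  have "((1 + c_alpha \<alpha> * x0)/2) * y \<le> ((1 + c_alpha \<alpha> * x0)/2) * z"
    using mult_left_mono[OF assms(4) k] .
  then show ?thesis using assms by (simp add: G_right)
qed

lemma green_level_finite:
  assumes "\<alpha> > 0" "0 \<le> x0" "x0 \<le> pi"
  shows "finite {y. green \<alpha> x0 y = t}"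
proof -
  define c where "c = c_alpha \<alpha>"
  have "c * x0 \<le> c * pi" using c_facts(1)[OF assms(1)] assms by (simp add: c_def)
  then have k1: "(1 - c * x0)/2 > 0" using c_facts(2)[OF assms(1)] by (simp add: c_def)
  have "c * x0 \<ge> 0" using c_facts(1)[OF assms(1)] assms by (simp add: c_def)
  then have k2: "(1 + c * x0)/2 > 0" by simp
  have "{y. green \<alpha> x0 y = t} \<subseteq>
     {(t - (1/(2*c) - x0/2)) / ((1 - c * x0)/2), ((1/(2*c) + x0/2) - t) / ((1 + c * x0)/2)}"
  proof
    fix y assume "y \<in> {y. green \<alpha> x0 y = t}"
    then have y: "green \<alpha> x0 y = t" by simp
    show "y \<in> {(t - (1/(2*c) - x0/2)) / ((1 - c * x0)/2), ((1/(2*c) + x0/2) - t) / ((1 + c * x0)/2)}"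
    proof (cases "y \<le> x0")
      case True
      then have "t = (1/(2*c) - x0/2) + ((1 - c * x0)/2) * y" using y G_left c_def by metis
      then have "y = (t - (1/(2*c) - x0/2)) / ((1 - c * x0)/2)" using k1
        by (simp add: field_simps)
      then show ?thesis by simp
    next
      case False
      then have "t = (1/(2*c) + x0/2) - ((1 + c * x0)/2) * y" using y G_right c_def
        by (metis linear)
      then have "y = ((1/(2*c) + x0/2) - t) / ((1 + c * x0)/2)" using k2
        by (simp add: field_simps)
      then show ?thesis by simp
    qed
  qed
  then show ?thesis by (rule finite_subset) simp
qed

lemma interval_props:
  assumes "\<alpha> > 0" "0 \<le> x0" "x0 \<le> pi" "0 < L" "L < pi"
  defines "a \<equiv> a_opt \<alpha> x0 L"
  shows "-pi < a - L \<and> a + L \<le> pi \<and> a - L \<le> x0 \<and> x0 \<le> a + L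
   \<and> (\<forall>y. -pi \<le> y \<and> y \<le> pi \<longrightarrow>
        (a-L \<le> y \<and> y \<le> a+L \<longrightarrow> green \<alpha> x0 (a-L) \<le> green \<alpha> x0 y)
      \<and> (\<not>(a-L \<le> y \<and> y \<le> a+L) \<longrightarrow> green \<alpha> x0 y \<le> green \<alpha> x0 (a-L)))
   \<and> (LINT y:{a-L..a+L}|lborel. green \<alpha> x0 y) = nu \<alpha> x0 L"
proof -
  define c where "c = c_alpha \<alpha>"
  have c0: "c > 0" and cpi: "c * pi < 1" and ca: "1/\<alpha> = 1/c - pi"
    using c_facts[OF assms(1)] by (auto simp: c_def)
  have cx0: "c * x0 \<le> c * pi" using c0 assms by simp
  have cx0': "c * x0 \<ge> 0" using c0 assms by simp
  have cL: "L * c < 1" using cpi c0 assms(5) by (metis mult.commute mult_strict_left_mono order.strict_trans)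
  have cL': "L * c > 0" using c0 assms by simp
  have nucond: "(x0 < (pi - L) / (1 - L * c)) = (x0 * (1 - L * c) < pi - L)"
    using cL by (simp add: pos_less_divide_eq)
  show ?thesis
  proof (cases "x0 * (1 - L * c) < pi - L")
    case True
    then have a: "a = x0 * (1 - L * c)" by (simp add: a_def a_opt_def c_def)
    have a0: "a \<ge> 0" using a cL assms by simp
    have p: "a - L = x0 - L * (1 + c * x0)" and q: "a + L = x0 + L * (1 - c * x0)"
      using a by (simp_all add: algebra_simps)
    have h1: "L * (1 + c * x0) \<ge> 0" using cx0' assms by simp
    have h2: "L * (1 - c * x0) \<ge> 0" using cx0 cpi assms by simp
    have geq: "green \<alpha> x0 (a - L) = green \<alpha> x0 (a + L)"
      using h1 h2 unfolding p q
      by (simp add: G_left G_right c_def[symmetric] field_simps)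
    have props: "-pi < a - L" "a + L \<le> pi" "a - L \<le> x0" "x0 \<le> a + L"
      using a0 assms True a h1 h2 p q by linarith+
    have mono: "\<forall>y. -pi \<le> y \<and> y \<le> pi \<longrightarrow>
        (a-L \<le> y \<and> y \<le> a+L \<longrightarrow> green \<alpha> x0 (a-L) \<le> green \<alpha> x0 y)
      \<and> (\<not>(a-L \<le> y \<and> y \<le> a+L) \<longrightarrow> green \<alpha> x0 y \<le> green \<alpha> x0 (a-L))"
    proof (intro allI impI conjI)
      fix y assume "a-L \<le> y \<and> y \<le> a+L"
      then show "green \<alpha> x0 (a-L) \<le> green \<alpha> x0 y"
        using G_mono_left[OF assms(1-3), of "a-L" y] G_mono_right[OF assms(1-3), of y "a+L"] geq
        by (cases "y \<le> x0") auto
    next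
      fix y assume "\<not>(a-L \<le> y \<and> y \<le> a+L)"
      then show "green \<alpha> x0 y \<le> green \<alpha> x0 (a-L)"
        using G_mono_left[OF assms(1-3), of y "a-L"] G_mono_right[OF assms(1-3), of "a+L" y] geq props
        by auto
    qed
    have "(LINT y:{a-L..a+L}|lborel. green \<alpha> x0 y) = nu \<alpha> x0 L"
      unfolding green_set_integral[OF props(3,4)] nu_def c_def[symmetric] nucond
      using True c0 unfolding p q by (simp add: field_simps) (simp add: algebra_simps power2_eq_square)
    with props mono show ?thesis by blast
  next
    case False
    then have a: "a = pi - L" by (simp add: a_def a_opt_def c_def)
    have "x0 * (L * c) \<ge> 0" using cL' assms by simp
    then have "x0 \<ge> pi - L" using False by (simp add: algebra_simps)
    then have props: "-pi < a - L" "a + L \<le> pi" "a - L \<le> x0" "x0 \<le> a + L"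
      using a assms by linarith+
    have "green \<alpha> x0 pi - green \<alpha> x0 (pi - 2*L) = x0 * (1 - L * c) - (pi - L)"
      using props a by (simp add: G_left G_right c_def[symmetric] field_simps)
    then have geq: "green \<alpha> x0 (a - L) \<le> green \<alpha> x0 (a + L)"
      using False a by (simp add: algebra_simps mult_2 cong: rev_conj_cong)
      (smt (verit))
    have mono: "\<forall>y. -pi \<le> y \<and> y \<le> pi \<longrightarrow>
        (a-L \<le> y \<and> y \<le> a+L \<longrightarrow> green \<alpha> x0 (a-L) \<le> green \<alpha> x0 y)
      \<and> (\<not>(a-L \<le> y \<and> y \<le> a+L) \<longrightarrow> green \<alpha> x0 y \<le> green \<alpha> x0 (a-L))"
    proof (intro allI impI conjI)
      fix y assume "-pi \<le> y \<and> y \<le> pi" "a-L \<le> y \<and> y \<le> a+L"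
      then show "green \<alpha> x0 (a-L) \<le> green \<alpha> x0 y"
        using G_mono_left[OF assms(1-3), of "a-L" y] G_mono_right[OF assms(1-3), of y "a+L"] geq
        by (cases "y \<le> x0") auto
    next
      fix y assume "-pi \<le> y \<and> y \<le> pi" "\<not>(a-L \<le> y \<and> y \<le> a+L)"
      then show "green \<alpha> x0 y \<le> green \<alpha> x0 (a-L)"
        using G_mono_left[OF assms(1-3), of y "a-L"] props a
        by auto
    qed
    have "(LINT y:{a-L..a+L}|lborel. green \<alpha> x0 y) = nu \<alpha> x0 L"
      unfolding green_set_integral[OF props(3,4)] nu_def c_def[symmetric] nucond ca
      using False c0 unfolding a by (simp add: field_simps) (simp add: algebra_simps power2_eq_square)
    with props mono show ?thesis by blast
  qed
qed

lemma eta_integral: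
  assumes "\<alpha> > 0" "0 \<le> x0" "x0 \<le> pi"
  shows "(LINT y:{-pi..pi}|lborel. green \<alpha> x0 y) = eta \<alpha> x0"
proof -
  have c0: "c_alpha \<alpha> > 0" and ca: "1/\<alpha> = 1/c_alpha \<alpha> - pi"
    using c_facts[OF assms(1)] by auto
  have ca2: "pi / \<alpha> = pi / c_alpha \<alpha> - pi * pi" using ca by (simp add: divide_inverse algebra_simps)
    (metis distrib_left power2_eq_square)
  have m: "-pi \<le> x0" using assms pi_gt_zero by linarith
  show ?thesis
    unfolding green_set_integral[of "-pi" x0 pi, OF m assms(3)] eta_def ca2
    using c0 by (simp add: ca field_simps) (simp add: algebra_simps power2_eq_square)
qed

lemma bounded_mult_set_integrable:
  fixes G f :: "real \<Rightarrow> real"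
  assumes fi: "set_integrable lborel {a..b} f" and Gc: "continuous_on UNIV G"
  shows "set_integrable lborel {a..b} (\<lambda>y. G y * f y)"
proof -
  have "compact (G ` {a..b})" by (rule compact_continuous_image[OF continuous_on_subset[OF Gc]]) auto
  then obtain B where B: "\<forall>y\<in>{a..b}. \<bar>G y\<bar> \<le> B"
    using compact_imp_bounded bounded_iff by (metis image_eqI real_norm_def)
  have i1: "integrable lborel (\<lambda>x. indicator {a..b} x * f x)" using fi by (simp add: set_integrable_def)
  have i2: "integrable lborel (\<lambda>x. B * (indicator {a..b} x * f x))" using i1 by simp
  have Gm: "G \<in> borel_measurable lborel" using Gc by (simp add: borel_measurable_continuous_onI)
  have m1: "(\<lambda>x. indicator {a..b} x * f x) \<in> borel_measurable lborel" using i1 by auto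
  have "(\<lambda>x. indicator {a..b} x * (G x * f x)) = (\<lambda>x. G x * (indicator {a..b} x * f x))"
    by (auto simp: algebra_simps)
  then have m: "(\<lambda>x. indicator {a..b} x * (G x * f x)) \<in> borel_measurable lborel"
    using Gm m1 by simp
  have "AE x in lborel. norm (indicator {a..b} x * (G x * f x)) \<le> norm (B * (indicator {a..b} x * f x))"
  proof (rule AE_I2)
    fix x show "norm (indicator {a..b} x * (G x * f x)) \<le> norm (B * (indicator {a..b} x * f x))"
    proof (cases "x \<in> {a..b}")
      case True
      then have "\<bar>G x\<bar> \<le> B" using B by blast
      then have "\<bar>G x\<bar> * \<bar>f x\<bar> \<le> \<bar>B\<bar> * \<bar>f x\<bar>" by (intro mult_right_mono) auto
      then show ?thesis using True by (simp add: abs_mult)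
    qed simp
  qed
  then show ?thesis unfolding set_integrable_def using Bochner_Integration.integrable_bound[OF i2 m] by simp
qed

lemma bathtub:
  fixes G f h :: "real \<Rightarrow> real"
  assumes fi: "set_integrable lborel {-pi..pi} f" and hi: "set_integrable lborel {-pi..pi} h"
    and Gc: "continuous_on UNIV G"
    and sign: "AE y in lborel. y \<in> {-pi..pi} \<longrightarrow> 0 \<le> (G y - t) * (h y - f y)"
    and fin: "finite {y. G y = t}"
    and eq: "(LINT y:{-pi..pi}|lborel. h y) = (LINT y:{-pi..pi}|lborel. f y)"
  shows "(LINT y:{-pi..pi}|lborel. G y * f y) \<le> (LINT y:{-pi..pi}|lborel. G y * h y)
    \<and> ((LINT y:{-pi..pi}|lborel. G y * f y) = (LINT y:{-pi..pi}|lborel. G y * h y)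
         \<longleftrightarrow> (AE y in lborel. y \<in> {-pi..pi} \<longrightarrow> f y = h y))"
proof -
  let ?S = "{-pi..pi}"
  define D where "D = (\<lambda>y. (G y * h y - G y * f y) - (t * h y - t * f y))"
  have Df: "\<And>y. D y = (G y - t) * (h y - f y)" unfolding D_def by (simp add: algebra_simps)
  have Gf: "set_integrable lborel ?S (\<lambda>y. G y * f y)" by (rule bounded_mult_set_integrable[OF fi Gc])
  have Gh: "set_integrable lborel ?S (\<lambda>y. G y * h y)" by (rule bounded_mult_set_integrable[OF hi Gc])
  have tf: "set_integrable lborel ?S (\<lambda>y. t * f y)" using fi by (rule set_integrable_mult_right)
  have th: "set_integrable lborel ?S (\<lambda>y. t * h y)" using hi by (rule set_integrable_mult_right)
  have Di: "set_integrable lborel ?S D" unfolding D_def using Gf Gh tf th by auto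
  have DI: "(LINT y:?S|lborel. D y) = (LINT y:?S|lborel. G y * h y) - (LINT y:?S|lborel. G y * f y)"
    unfolding D_def using Gf Gh tf th eq by (simp add: set_integral_diff)
  have Dii: "integrable lborel (\<lambda>y. indicator ?S y * D y)" using Di by (simp add: set_integrable_def)
  have Dnn: "AE y in lborel. 0 \<le> indicator ?S y * D y"
    using sign by eventually_elim (auto simp: Df indicator_def)
  have "0 \<le> (LINT y:?S|lborel. D y)"
    unfolding set_lebesgue_integral_def using Dnn by (simp add: integral_nonneg_AE)
  then have le: "(LINT y:?S|lborel. G y * f y) \<le> (LINT y:?S|lborel. G y * h y)" using DI by simp
  have nz: "AE y in lborel. y \<notin> {y. G y = t}"
    by (rule AE_not_in[OF finite_imp_null_set_lborel[OF fin]])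
  have "((LINT y:?S|lborel. G y * f y) = (LINT y:?S|lborel. G y * h y))
     \<longleftrightarrow> (LINT y:?S|lborel. D y) = 0" using DI by linarith
  also have "\<dots> \<longleftrightarrow> (AE y in lborel. indicator ?S y * D y = 0)"
    unfolding set_lebesgue_integral_def using integral_nonneg_eq_0_iff_AE[OF Dii Dnn] by simp
  also have "\<dots> \<longleftrightarrow> (AE y in lborel. y \<in> ?S \<longrightarrow> f y = h y)"
  proof
    assume "AE y in lborel. indicator ?S y * D y = 0"
    then show "AE y in lborel. y \<in> ?S \<longrightarrow> f y = h y"
      using nz by eventually_elim (auto simp: Df indicator_def)
  next
    assume "AE y in lborel. y \<in> ?S \<longrightarrow> f y = h y"
    then show "AE y in lborel. indicator ?S y * D y = 0"
      by eventually_elim (auto simp: Df indicator_def)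
  qed
  finally show ?thesis using le by blast
qed

lemma step_integrals:
  fixes G h :: "real \<Rightarrow> real"
  assumes pq: "-pi \<le> p" "p \<le> q" "q \<le> pi" and hdef: "\<forall>x. h x = A + B * indicator {p..q} x"
    and Gc: "continuous_on UNIV G"
  shows "set_integrable lborel {-pi..pi} h
    \<and> (LINT y:{-pi..pi}|lborel. h y) = A*(2*pi) + B*(q-p)
    \<and> (LINT y:{-pi..pi}|lborel. G y * h y) = A * (LINT y:{-pi..pi}|lborel. G y) + B * (LINT y:{p..q}|lborel. G y)"
proof -
  let ?S = "{-pi..pi}"
  have sub: "{p..q} \<subseteq> ?S" using pq by auto
  have e1: "(\<lambda>x. indicator ?S x * h x) = (\<lambda>x. A * indicator ?S x + B * indicator {p..q} x)"
    using hdef sub by (auto simp: indicator_def fun_eq_iff)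
  have iS: "integrable lborel (indicator ?S :: real \<Rightarrow> real)" by (intro integrable_real_indicator) auto
  have iJ: "integrable lborel (indicator {p..q} :: real \<Rightarrow> real)" using pq by (intro integrable_real_indicator) auto
  have hi: "set_integrable lborel ?S h" unfolding set_integrable_def using e1 iS iJ by simp
  have "(LINT y:?S|lborel. h y) = A * measure lborel ?S + B * measure lborel {p..q}"
    unfolding set_lebesgue_integral_def using e1 iS iJ by simp
  also have "\<dots> = A*(2*pi) + B*(q-p)" using pq by simp
  finally have hI: "(LINT y:?S|lborel. h y) = A*(2*pi) + B*(q-p)" .
  have gS: "integrable lborel (\<lambda>x. indicator ?S x * G x)"
    using borel_integrable_atLeastAtMost'[OF continuous_on_subset[OF Gc]] by (simp add: set_integrable_def)
  have gJ: "integrable lborel (\<lambda>x. indicator {p..q} x * G x)"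
    using borel_integrable_atLeastAtMost'[OF continuous_on_subset[OF Gc]] by (simp add: set_integrable_def)
  have e2: "(\<lambda>x. indicator ?S x * (G x * h x)) = (\<lambda>x. A * (indicator ?S x * G x) + B * (indicator {p..q} x * G x))"
    using hdef sub by (auto simp: indicator_def fun_eq_iff algebra_simps)
  have "(LINT y:?S|lborel. G y * h y) = A * (LINT y:?S|lborel. G y) + B * (LINT y:{p..q}|lborel. G y)"
    unfolding set_lebesgue_integral_def using e2 gS gJ by simp
  with hi hI show ?thesis by blast
qed

theorem theorem2:
  fixes \<alpha> m M s x0 :: real and f :: "real \<Rightarrow> real"
  assumes "\<alpha> > 0" and "0 \<le> m" and "m < s" and "s < M"
    and "f \<in> F_class m M s"
    and "x0 \<in> {0..pi}"
  defines "l \<equiv> pi * (s - m) / (M - m)"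
  defines "lm \<equiv> pi - l"
  shows "eta \<alpha> x0 * M - (M - m) * nu \<alpha> x0 lm \<le> u_sol \<alpha> f x0
       \<and> u_sol \<alpha> f x0 \<le> eta \<alpha> x0 * m + (M - m) * nu \<alpha> x0 l
       \<and> (u_sol \<alpha> f x0 = eta \<alpha> x0 * m + (M - m) * nu \<alpha> x0 l \<longleftrightarrow>
            (AE x in lborel. x \<in> {-pi..pi} \<longrightarrow>
               f x = m + (M - m) * indicator (I_int (a_opt \<alpha> x0 l) l) x))
       \<and> (u_sol \<alpha> f x0 = eta \<alpha> x0 * M - (M - m) * nu \<alpha> x0 lm \<longleftrightarrow>
            (AE x in lborel. x \<in> {-pi..pi} \<longrightarrow>
               f x = M - (M - m) * indicator (I_int (a_opt \<alpha> x0 lm) lm) x))"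
proof -
  let ?S = "{-pi..pi}"
  let ?G = "green \<alpha> x0"
  have x0: "0 \<le> x0" "x0 \<le> pi" using assms(6) by auto
  have Mm: "M - m > 0" using assms by simp
  have l0: "0 < l" unfolding l_def using assms by (simp add: divide_pos_pos)
  have lpi: "l < pi" unfolding l_def using assms pi_gt_zero by (simp add: divide_less_eq)
  have lm0: "0 < lm" "lm < pi" unfolding lm_def using l0 lpi by auto
  have ml: "(M - m) * l = pi * (s - m)" unfolding l_def using Mm by simp
  have fi: "set_integrable lborel ?S f" and fb: "AE x in lborel. x \<in> ?S \<longrightarrow> m \<le> f x \<and> f x \<le> M"
    and fa: "(LINT x:?S|lborel. \<bar>f x\<bar>) = 2 * pi * s"
    using assms(5) by (auto simp: F_class_def)
  have fI: "(LINT x:?S|lborel. f x) = 2 * pi * s"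
  proof -
    have m1: "(\<lambda>x. indicator ?S x * f x) \<in> borel_measurable lborel" using fi by (auto simp: set_integrable_def)
    have "(\<lambda>x. indicator ?S x * \<bar>f x\<bar>) = (\<lambda>x. \<bar>indicator ?S x * f x\<bar>)"
      by (auto simp: indicator_def fun_eq_iff)
    then have m2: "(\<lambda>x. indicator ?S x * \<bar>f x\<bar>) \<in> borel_measurable lborel" using m1 by simp
    have "AE x in lborel. indicator ?S x * \<bar>f x\<bar> = indicator ?S x * f x"
      using fb by eventually_elim (use assms(2) in \<open>auto simp: indicator_def\<close>)
    then have "(LINT x:?S|lborel. \<bar>f x\<bar>) = (LINT x:?S|lborel. f x)"
      unfolding set_lebesgue_integral_def using integral_cong_AE[OF m2 m1] by simp
    then show ?thesis using fa by simp
  qed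
  have Gc: "continuous_on UNIV ?G" by (rule green_cont)
  have u: "u_sol \<alpha> f x0 = (LINT y:?S|lborel. ?G y * f y)" by (simp add: u_sol_def)
  have eta: "(LINT y:?S|lborel. ?G y) = eta \<alpha> x0" by (rule eta_integral[OF assms(1) x0])
  define a1 where "a1 = a_opt \<alpha> x0 l"
  define h1 where "h1 = (\<lambda>x. m + (M - m) * indicator (I_int a1 l) x)"
  from interval_props[OF assms(1) x0 l0 lpi] have P1:
    "-pi < a1 - l \<and> a1 + l \<le> pi \<and> a1 - l \<le> x0 \<and> x0 \<le> a1 + l
   \<and> (\<forall>y. -pi \<le> y \<and> y \<le> pi \<longrightarrow>
        (a1-l \<le> y \<and> y \<le> a1+l \<longrightarrow> ?G (a1-l) \<le> ?G y)
      \<and> (\<not>(a1-l \<le> y \<and> y \<le> a1+l) \<longrightarrow> ?G y \<le> ?G (a1-l)))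
   \<and> (LINT y:{a1-l..a1+l}|lborel. ?G y) = nu \<alpha> x0 l" unfolding a1_def .
  have S1: "set_integrable lborel ?S h1
    \<and> (LINT y:?S|lborel. h1 y) = m*(2*pi) + (M-m)*((a1+l)-(a1-l))
    \<and> (LINT y:?S|lborel. ?G y * h1 y) = m * (LINT y:?S|lborel. ?G y) + (M-m) * (LINT y:{a1-l..a1+l}|lborel. ?G y)"
    by (rule step_integrals[OF _ _ _ _ Gc]) (use P1 l0 in \<open>auto simp: h1_def I_int_def\<close>)
  have sign1: "AE y in lborel. y \<in> ?S \<longrightarrow> 0 \<le> (?G y - ?G (a1-l)) * (h1 y - f y)"
    using fb
  proof eventually_elim
    case (elim y)
    show ?case
    proof
      assume yS: "y \<in> ?S"
      show "0 \<le> (?G y - ?G (a1-l)) * (h1 y - f y)"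
      proof (cases "a1-l \<le> y \<and> y \<le> a1+l")
        case True
        then have "h1 y = M" by (simp add: h1_def I_int_def)
        then show ?thesis using True P1 yS elim by (intro mult_nonneg_nonneg) auto
      next
        case False
        then have "h1 y = m" by (simp add: h1_def I_int_def)
        then show ?thesis using False P1 yS elim by (intro mult_nonpos_nonpos) auto
      qed
    qed
  qed
  have eq1: "(LINT y:?S|lborel. h1 y) = (LINT y:?S|lborel. f y)"
    using S1 fI ml by (simp add: algebra_simps)
  note B1 = bathtub[OF fi conjunct1[OF S1] Gc sign1 green_level_finite[OF assms(1) x0] eq1]
  have V1: "(LINT y:?S|lborel. ?G y * h1 y) = eta \<alpha> x0 * m + (M - m) * nu \<alpha> x0 l"
    using S1 P1 eta by simp
  define a2 where "a2 = a_opt \<alpha> x0 lm"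
  define h2 where "h2 = (\<lambda>x. M - (M - m) * indicator (I_int a2 lm) x)"
  from interval_props[OF assms(1) x0 lm0] have P2:
    "-pi < a2 - lm \<and> a2 + lm \<le> pi \<and> a2 - lm \<le> x0 \<and> x0 \<le> a2 + lm
   \<and> (\<forall>y. -pi \<le> y \<and> y \<le> pi \<longrightarrow>
        (a2-lm \<le> y \<and> y \<le> a2+lm \<longrightarrow> ?G (a2-lm) \<le> ?G y)
      \<and> (\<not>(a2-lm \<le> y \<and> y \<le> a2+lm) \<longrightarrow> ?G y \<le> ?G (a2-lm)))
   \<and> (LINT y:{a2-lm..a2+lm}|lborel. ?G y) = nu \<alpha> x0 lm" unfolding a2_def .
  have S2: "set_integrable lborel ?S h2
    \<and> (LINT y:?S|lborel. h2 y) = M*(2*pi) + (-(M-m))*((a2+lm)-(a2-lm))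
    \<and> (LINT y:?S|lborel. ?G y * h2 y) = M * (LINT y:?S|lborel. ?G y) + (-(M-m)) * (LINT y:{a2-lm..a2+lm}|lborel. ?G y)"
    by (rule step_integrals[OF _ _ _ _ Gc]) (use P2 lm0 in \<open>auto simp: h2_def I_int_def algebra_simps\<close>)
  have sign2: "AE y in lborel. y \<in> ?S \<longrightarrow> 0 \<le> (?G y - ?G (a2-lm)) * (f y - h2 y)"
    using fb
  proof eventually_elim
    case (elim y)
    show ?case
    proof
      assume yS: "y \<in> ?S"
      show "0 \<le> (?G y - ?G (a2-lm)) * (f y - h2 y)"
      proof (cases "a2-lm \<le> y \<and> y \<le> a2+lm")
        case True
        then have "h2 y = m" by (simp add: h2_def I_int_def)
        then show ?thesis using True P2 yS elim by (intro mult_nonneg_nonneg) auto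
      next
        case False
        then have "h2 y = M" by (simp add: h2_def I_int_def)
        then show ?thesis using False P2 yS elim by (intro mult_nonpos_nonpos) auto
      qed
    qed
  qed
  have eq2: "(LINT y:?S|lborel. f y) = (LINT y:?S|lborel. h2 y)"
    using S2 fI ml unfolding lm_def by (simp add: algebra_simps)
  note B2 = bathtub[OF conjunct1[OF S2] fi Gc sign2 green_level_finite[OF assms(1) x0] eq2]
  have V2: "(LINT y:?S|lborel. ?G y * h2 y) = eta \<alpha> x0 * M - (M - m) * nu \<alpha> x0 lm"
    using S2 P2 eta by (simp add: algebra_simps)
  have AE2: "(AE y in lborel. y \<in> ?S \<longrightarrow> h2 y = f y) \<longleftrightarrow> (AE y in lborel. y \<in> ?S \<longrightarrow> f y = h2 y)"
    by (simp add: eq_commute)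
  show ?thesis
    using B1 B2 V1 V2 AE2 S1 S2 unfolding u h1_def h2_def a1_def a2_def by auto
qed

end
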